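(* For every integer $a\ge1$ and every $x\in\mathbb R$, \[ \int_{-1/2}^{1/2}\log|x^a-y^a|\,dy\ \ge\ -a(2\log2+1). \] *)

theory Defs
  imports "HOL-Analysis.Analysis"
begin

end

theory Submission
  imports Defs "HOL-Real_Asymp.Real_Asymp" "HOL-Computational_Algebra.Fundamental_Theorem_Algebra"
begin


lemma F_deriv: fixes c y :: real assumes "y \<noteq> c"
  shows "((\<lambda>y. (y - c) * ln ((y-c)^2) / 2 - y) has_vector_derivative (ln ((y-c)^2) / 2)) (at y)"
proof -
  have D: "((\<lambda>y. (y - c) * ln ((y-c)^2) / 2 - y) has_real_derivative 
     ((1 * ln ((y-c)^2) + (y-c) * (2 * (y-c) * 1 / (y-c)^2)) / 2 - 1)) (at y)"
    using assms by (auto intro!: derivative_eq_intros)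
  have "\<And>d::real. d \<noteq> 0 \<Longrightarrow> d * (2 * d * 1 / d^2) = 2" by (simp add: power2_eq_square)
  then have E: "(y-c) * (2 * (y-c) * 1 / (y-c)^2) = 2" using assms by (metis right_minus_eq)
  have Q: "((1 * ln ((y-c)^2) + (y-c) * (2 * (y-c) * 1 / (y-c)^2)) / 2 - 1) = ln ((y-c)^2) / 2"
    by (simp only: E) (simp add: add_divide_distrib)
  show ?thesis using D unfolding Q by (simp add: has_real_derivative_iff_has_vector_derivative)
qed

lemma ln_sq: "ln ((u::real)^2) / 2 = ln \<bar>u\<bar>"
proof (cases "u = 0")
  case False
  have "u^2 = \<bar>u\<bar>^2" by simp
  moreover have "ln (\<bar>u\<bar>^2) = 2 * ln \<bar>u\<bar>" using False by (subst ln_realpow) auto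
  ultimately show ?thesis by simp
qed simp

lemma ent_pos: fixes s t :: real assumes "s + t = 1" "s > 0" "t > 0" shows "s * ln s + t * ln t \<ge> - ln 2"
proof -
  have a: "ln (2 * s) \<ge> 1 - 1/(2 * s)" using ln_le_minus_one[of "1/(2 * s)"] assms by (simp add: ln_div)
  have b: "ln (2 * t) \<ge> 1 - 1/(2 * t)" using ln_le_minus_one[of "1/(2 * t)"] assms by (simp add: ln_div)
  have "s * ln (2 * s) \<ge> s * (1 - 1/(2 * s))" using a assms by (intro mult_left_mono) auto
  moreover have "t * ln (2 * t) \<ge> t * (1 - 1/(2 * t))" using b assms by (intro mult_left_mono) auto
  moreover have "s * (1 - 1/(2 * s)) = s - 1/2" "t * (1 - 1/(2 * t)) = t - 1/2" using assms by (simp_all add: field_simps)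
  moreover have "ln (2 * s) = ln 2 + ln s" "ln (2 * t) = ln 2 + ln t" using assms by (simp_all add: ln_mult)
  moreover have "s * ln 2 + t * ln 2 = ln 2" using assms(1) by (metis distrib_right mult_1)
  ultimately show ?thesis using assms by (simp add: algebra_simps)
qed

lemma ent_neg: fixes s t :: real assumes "s + t = 1" "s < 0" shows "s * ln \<bar>s\<bar> + t * ln \<bar>t\<bar> \<ge> 0"
proof (cases "\<bar>s\<bar> \<le> 1")
  case True
  have "s * ln \<bar>s\<bar> \<ge> 0" using True assms by (intro mult_nonpos_nonpos) auto
  moreover have "t * ln \<bar>t\<bar> \<ge> 0" using assms by (intro mult_nonneg_nonneg) auto
  ultimately show ?thesis by simp
next
  case False
  have "ln \<bar>t\<bar> \<ge> ln \<bar>s\<bar>" using assms False by simp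
  moreover have "ln \<bar>s\<bar> \<ge> 0" using False by simp
  ultimately have "t * ln \<bar>t\<bar> \<ge> \<bar>s\<bar> * ln \<bar>s\<bar>" using assms by (intro mult_mono) auto
  then show ?thesis using assms by simp
qed

lemma ent: fixes s t :: real assumes "s + t = 1" shows "s * ln \<bar>s\<bar> + t * ln \<bar>t\<bar> \<ge> - ln 2"
proof -
  consider "s < 0" | "t < 0" | "s = 0" | "t = 0" | "s > 0 \<and> t > 0" by linarith
  then show ?thesis
  proof cases
    case 1 then show ?thesis using ent_neg[OF assms] by (smt (verit) ln_ge_zero)
  next
    case 2 then show ?thesis using ent_neg[of t s] assms by (smt (verit) ln_ge_zero)
  next
    case 3 then show ?thesis using assms by simp
  next
    case 4 then show ?thesis using assms by simp
  next
    case 5 then show ?thesis using ent_pos[OF assms] by simp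
  qed
qed

lemma cont_g: "continuous_on UNIV (\<lambda>u::real. u * ln (u^2) / 2)"
proof (rule continuous_at_imp_continuous_on, rule ballI)
  fix u :: real
  show "isCont (\<lambda>u::real. u * ln (u^2) / 2) u"
  proof (cases "u = 0")
    case True
    have l: "((\<lambda>u::real. u * ln (u^2) / 2) \<longlongrightarrow> 0) (at_left 0)" by real_asymp
    have r: "((\<lambda>u::real. u * ln (u^2) / 2) \<longlongrightarrow> 0) (at_right 0)" by real_asymp
    have "((\<lambda>u::real. u * ln (u^2) / 2) \<longlongrightarrow> 0) (at 0)"
      using l r by (simp add: filterlim_split_at)
    then show ?thesis using True by (simp add: isCont_def)
  next
    case False
    then show ?thesis by (auto intro!: continuous_intros)
  qed
qed

lemma ln_abs_int: fixes c :: real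
  shows "set_integrable lborel {-1/2..1/2} (\<lambda>y. ln \<bar>y - c\<bar>) \<and>
         (LINT y:{-1/2..1/2}|lborel. ln \<bar>y - c\<bar>) \<ge> - ln 2 - 1"
proof -
  define F where "F = (\<lambda>y::real. (y - c) * ln ((y-c)^2) / 2 - y)"
  have "continuous_on UNIV (\<lambda>y. (\<lambda>u::real. u * ln (u^2) / 2) (y - c) - y)"
    by (intro continuous_intros continuous_on_compose2[OF cont_g]) auto
  then have cont: "continuous_on {-1/2..1/2} F"
    unfolding F_def by (rule continuous_on_subset) auto
  have hi0: "((\<lambda>y. ln ((y-c)^2) / 2) has_integral (F (1/2) - F (-1/2))) {-1/2..1/2}"
    using cont unfolding F_def
    by (intro fundamental_theorem_of_calculus_interior_strong[of "{c}"] F_deriv) auto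
  have hi: "((\<lambda>y. ln \<bar>y - c\<bar>) has_integral (F (1/2) - F (-1/2))) {-1/2..1/2}"
    using hi0 by (simp add: ln_sq)
  define M where "M = \<bar>c\<bar> + 1"
  have bnd: "ln \<bar>y - c\<bar> \<le> M" if "y \<in> {-1/2..1/2}" for y
  proof (cases "y = c")
    case False
    then have "ln \<bar>y - c\<bar> \<le> \<bar>y - c\<bar> - 1" by (intro ln_le_minus_one) auto
    then show ?thesis using that unfolding M_def by auto
  qed (simp add: M_def)
  have "(\<lambda>y. M - ln \<bar>y - c\<bar>) integrable_on {-1/2..1/2}"
    using hi by (intro integrable_diff integrable_const_ivl) (auto simp: integrable_on_def)
  then have A1: "(\<lambda>y. M - ln \<bar>y - c\<bar>) absolutely_integrable_on {-1/2..1/2}"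
    using bnd by (intro nonnegative_absolutely_integrable_1) auto
  have A2: "(\<lambda>y. M) absolutely_integrable_on {-1/2..1/2::real}"
    by (intro nonnegative_absolutely_integrable_1 integrable_const_ivl) (auto simp: M_def)
  have "(\<lambda>y. M - (M - ln \<bar>y - c\<bar>)) absolutely_integrable_on {-1/2..1/2}"
    using A2 A1 by (rule set_integral_diff(1))
  then have A: "set_integrable lebesgue {-1/2..1/2} (\<lambda>y. ln \<bar>y - c\<bar>)" by simp
  have SB: "set_integrable lborel {-1/2..1/2} (\<lambda>y. ln \<bar>y - c\<bar>)"
    using A unfolding set_integrable_def
    by (subst (asm) integrable_completion) measurable
  have "(LINT y:{-1/2..1/2}|lborel. ln \<bar>y - c\<bar>) = integral {-1/2..1/2} (\<lambda>y. ln \<bar>y - c\<bar>)"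
    using SB by (rule set_borel_integral_eq_integral(2))
  also have "\<dots> = F (1/2) - F (-1/2)" using hi by (rule integral_unique)
  also have "\<dots> = (1/2 - c) * ln \<bar>1/2 - c\<bar> + (1/2 + c) * ln \<bar>1/2 + c\<bar> - 1"
  proof -
    have Fy: "F y = (y - c) * ln \<bar>y - c\<bar> - y" for y
      unfolding F_def using ln_sq[of "y - c"] by (metis times_divide_eq_right)
    have "\<bar>-1/2 - c\<bar> = \<bar>1/2 + c\<bar>" by linarith
    then have "F (-1/2) = - (1/2 + c) * ln \<bar>1/2 + c\<bar> + 1/2" using Fy[of "-1/2"] by simp
    moreover have "F (1/2) = (1/2 - c) * ln \<bar>1/2 - c\<bar> - 1/2" using Fy[of "1/2"] by simp
    ultimately show ?thesis by (simp add: algebra_simps)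
  qed
  also have "\<dots> \<ge> - ln 2 - 1" using ent[of "1/2 - c" "1/2 + c"] by simp
  finally show ?thesis using SB by simp
qed



lemma L: fixes A :: "complex multiset" and y :: real
  shows "(\<forall>z\<in>#A. y \<noteq> Re z) \<Longrightarrow> cmod (\<Prod>z\<in>#A. (complex_of_real y - z)) \<ge> (\<Prod>z\<in>#A. \<bar>y - Re z\<bar>)
    \<and> (\<Prod>z\<in>#A. \<bar>y - Re z\<bar>) > 0 \<and> ln (\<Prod>z\<in>#A. \<bar>y - Re z\<bar>) = (\<Sum>z\<in>#A. ln \<bar>y - Re z\<bar>)"
proof (induction A)
  case empty
  then show ?case by simp
next
  case (add w A)
  let ?P = "\<Prod>z\<in>#A. \<bar>y - Re z\<bar>"
  from add have IH: "cmod (\<Prod>z\<in>#A. (complex_of_real y - z)) \<ge> ?P" "?P > 0" "ln ?P = (\<Sum>z\<in>#A. ln \<bar>y - Re z\<bar>)"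
    by auto
  have w: "\<bar>y - Re w\<bar> > 0" using add.prems by auto
  have "\<bar>y - Re w\<bar> = \<bar>Re (complex_of_real y - w)\<bar>" by simp
  also have "\<dots> \<le> cmod (complex_of_real y - w)" by (rule abs_Re_le_cmod)
  finally have cw: "\<bar>y - Re w\<bar> \<le> cmod (complex_of_real y - w)" .
  have "\<bar>y - Re w\<bar> * ?P \<le> cmod (complex_of_real y - w) * cmod (\<Prod>z\<in>#A. (complex_of_real y - z))"
    using cw IH w by (intro mult_mono) auto
  moreover have "0 \<notin> (\<lambda>z. \<bar>y - Re z\<bar>) ` set_mset A" using add.prems by auto
  ultimately show ?case using IH w by (simp add: norm_mult ln_mult)
qed

lemma factor: fixes x :: real and a :: nat assumes "a \<ge> 1"
  obtains C :: "real multiset" where "size C = a"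
    "\<And>y. y \<notin># C \<Longrightarrow> ln \<bar>x^a - y^a\<bar> \<ge> (\<Sum>c\<in>#C. ln \<bar>y - c\<bar>)"
proof -
  define p :: "complex poly" where "p = monom 1 a + [:- complex_of_real (x^a):]"
  have deg: "degree p = a" unfolding p_def using assms
    by (subst degree_add_eq_left) (auto simp: degree_monom_eq)
  have lc: "lead_coeff p = 1" unfolding deg unfolding p_def using assms by (simp add: coeff_pCons split: nat.split)
  have "p \<noteq> 0" using deg assms by auto
  then obtain A where A: "size A = degree p" "p = smult (lead_coeff p) (\<Prod>z\<in>#A. [:-z, 1:])"
    using alg_closed_imp_factorization by blast
  have pe: "poly p (complex_of_real y) = (\<Prod>z\<in>#A. (complex_of_real y - z))" for y
    by (subst A(2)) (simp add: lc poly_prod_mset multiset.map_comp o_def)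
  have pv: "poly p (complex_of_real y) = complex_of_real (y^a - x^a)" for y
    unfolding p_def by (simp add: poly_monom)
  show ?thesis
  proof (rule that[of "image_mset Re A"])
    show "size (image_mset Re A) = a" using A deg by simp
  next
    fix y assume y: "y \<notin># image_mset Re A"
    then have "\<forall>z\<in>#A. y \<noteq> Re z" by auto
    note l = L[OF this]
    have "cmod (\<Prod>z\<in>#A. (complex_of_real y - z)) = cmod (complex_of_real (y^a - x^a))"
      using pe[of y] pv[of y] by metis
    also have "\<dots> = \<bar>x^a - y^a\<bar>" by (simp only: norm_of_real abs_minus_commute)
    finally have "cmod (\<Prod>z\<in>#A. (complex_of_real y - z)) = \<bar>x^a - y^a\<bar>" .
    then have "(\<Prod>z\<in>#A. \<bar>y - Re z\<bar>) \<le> \<bar>x^a - y^a\<bar>" using l by simp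
    then have "ln (\<Prod>z\<in>#A. \<bar>y - Re z\<bar>) \<le> ln \<bar>x^a - y^a\<bar>" using l by (intro ln_mono) auto
    then show "(\<Sum>c\<in>#image_mset Re A. ln \<bar>y - c\<bar>) \<le> ln \<bar>x^a - y^a\<bar>" using l 
      by (simp add: multiset.map_comp o_def)
  qed
qed


lemma sum_int: fixes C :: "real multiset"
  shows "set_integrable lborel {-1/2..1/2} (\<lambda>y. \<Sum>c\<in>#C. ln \<bar>y - c\<bar>) \<and>
         (LINT y:{-1/2..1/2}|lborel. (\<Sum>c\<in>#C. ln \<bar>y - c\<bar>)) \<ge> - real (size C) * (ln 2 + 1)"
proof (induction C)
  case empty
  then show ?case by (simp add: set_integrable_def set_lebesgue_integral_def)
next
  case (add w C)
  have I1: "set_integrable lborel {-1/2..1/2} (\<lambda>y. ln \<bar>y - w\<bar>)"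
    and V1: "(LINT y:{-1/2..1/2}|lborel. ln \<bar>y - w\<bar>) \<ge> - ln 2 - 1" using ln_abs_int[of w] by auto
  have I2: "set_integrable lborel {-1/2..1/2} (\<lambda>y. \<Sum>c\<in>#C. ln \<bar>y - c\<bar>)"
    and V2: "(LINT y:{-1/2..1/2}|lborel. (\<Sum>c\<in>#C. ln \<bar>y - c\<bar>)) \<ge> - real (size C) * (ln 2 + 1)"
    using add by auto
  have "set_integrable lborel {-1/2..1/2} (\<lambda>y. ln \<bar>y - w\<bar> + (\<Sum>c\<in>#C. ln \<bar>y - c\<bar>))"
    using I1 I2 by (rule set_integral_add(1))
  moreover have "(LINT y:{-1/2..1/2}|lborel. ln \<bar>y - w\<bar> + (\<Sum>c\<in>#C. ln \<bar>y - c\<bar>)) =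
     (LINT y:{-1/2..1/2}|lborel. ln \<bar>y - w\<bar>) + (LINT y:{-1/2..1/2}|lborel. (\<Sum>c\<in>#C. ln \<bar>y - c\<bar>))"
    using I1 I2 by (rule set_integral_add(2))
  ultimately show ?case using V1 V2 by (simp add: algebra_simps)
qed

theorem mainTheorem6:
  fixes a :: nat and x :: real
  assumes "a \<ge> 1"
  shows "set_integrable lborel {-1/2..1/2::real} (\<lambda>y. ln \<bar>x ^ a - y ^ a\<bar>)
    \<and> (LINT y:{-1/2..1/2}|lborel. ln \<bar>x ^ a - y ^ a\<bar>) \<ge> - real a * (2 * ln 2 + 1)"
proof -
  obtain C where C: "size C = a"
    "\<And>y. y \<notin># C \<Longrightarrow> ln \<bar>x^a - y^a\<bar> \<ge> (\<Sum>c\<in>#C. ln \<bar>y - c\<bar>)"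
    using factor[OF assms] by blast
  define I where "I = {-1/2..1/2::real}"
  define g where "g = (\<lambda>y. \<Sum>c\<in>#C. ln \<bar>y - c\<bar>)"
  define f where "f = (\<lambda>y::real. ln \<bar>x ^ a - y ^ a\<bar>)"
  define K where "K = \<bar>x\<bar>^a + 1"
  have G: "set_integrable lborel I g" "(LINT y:I|lborel. g y) \<ge> - real a * (ln 2 + 1)"
    using sum_int[of C] C(1) unfolding I_def g_def by auto
  have AEn: "AE y in lborel. y \<notin> set_mset C"
    by (intro AE_not_in finite_imp_null_set_lborel) auto
  have low: "AE y in lborel. y \<in> I \<longrightarrow> g y \<le> f y"
    using AEn by eventually_elim (use C(2) in \<open>auto simp: f_def g_def\<close>)
  have up: "f y \<le> K" if "y \<in> I" for y
  proof -
    have "\<bar>y\<bar> \<le> 1" using that by (auto simp: I_def)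
    then have "\<bar>y\<bar>^a \<le> 1" by (simp add: power_le_one)
    then have b: "\<bar>x^a - y^a\<bar> \<le> K" unfolding K_def
      using abs_triangle_ineq4[of "x^a" "y^a"] by (simp add: power_abs)
    show ?thesis
    proof (cases "x^a - y^a = 0")
      case True then show ?thesis by (simp add: f_def K_def)
    next
      case False
      then have "ln \<bar>x^a - y^a\<bar> \<le> \<bar>x^a - y^a\<bar> - 1" by (intro ln_le_minus_one) auto
      then show ?thesis using b by (simp add: f_def)
    qed
  qed
  have KI: "set_integrable lborel I (\<lambda>y. K)" unfolding I_def
    by (intro borel_integrable_atLeastAtMost') auto
  have B: "set_integrable lborel I (\<lambda>y. \<bar>g y\<bar> + K)"
    using set_integrable_abs[OF G(1)] KI by (rule set_integral_add(1))
  have fm: "f \<in> borel_measurable lborel" unfolding f_def by measurable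
  have i1: "integrable lborel (\<lambda>y. indicator I y *\<^sub>R (\<bar>g y\<bar> + K))"
    using B unfolding set_integrable_def .
  have m1: "(\<lambda>y. indicator I y *\<^sub>R f y) \<in> borel_measurable lborel"
    using fm unfolding I_def by measurable
  have a1: "AE y in lborel. norm (indicator I y *\<^sub>R f y) \<le> norm (indicator I y *\<^sub>R (\<bar>g y\<bar> + K))"
    using low
  proof eventually_elim
    case (elim y)
    show ?case
    proof (cases "y \<in> I")
      case True
      have "K \<ge> 0" unfolding K_def by simp
      then have "\<bar>f y\<bar> \<le> \<bar>\<bar>g y\<bar> + K\<bar>" using elim True up[OF True] by linarith
      then show ?thesis using True by simp
    qed simp
  qed
  have FI: "set_integrable lborel I f"
    unfolding set_integrable_def using Bochner_Integration.integrable_bound[OF i1 m1 a1] .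
  have "(LINT y:I|lborel. g y) \<le> (LINT y:I|lborel. f y)"
    using G(1) FI low by (rule set_integral_mono_AE)
  moreover have "- real a * (ln 2 + 1) \<ge> - real a * (2 * ln 2 + 1)"
    using ln_ge_zero[of 2] by (intro mult_left_mono_neg) auto
  ultimately show ?thesis using FI G(2) unfolding I_def f_def by linarith
qed

end
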